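(* Let $\{\mathsf{f}(\mathsf{x},n)\}$ be a probability distribution on $\mathbb{Z}^d\times\mathbb{N}$ (with $\mathbb{N}=\{1,2,\dots\}$) satisfying the non-degeneracy, aperiodicity and exponential-tail assumptions in the context, and let $\lambda(\xi)$ and $\mathsf{f}_\xi$ be as in the context. Then there exist $\delta>0$ and $\epsilon>0$ such that for every $\xi\in\mathbb{C}^d$ with $|\xi|<\delta$ the function $\hat{\mathsf{f}}_\xi(z)=\sum_n\mathsf{f}_\xi(n)z^n$ satisfies: (a) $\hat{\mathsf{f}}_\xi(0)=0$ and the series $\hat{\mathsf{f}}_\xi(z)$ converges absolutely in a neighbourhood of the closed disc $\{|z|\le1+\epsilon\}$; (b) $z=1$ is the only zero of $\hat{\mathsf{f}}_\xi(z)-1$ in $\{|z|\le 1+\epsilon\}$; (c) $\hat{\mathsf{f}}_\xi'(1)\neq0$.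
   Context: Assumptions: the random vector $\mathsf{U}=(\mathsf{X},\mathsf{T})\in\mathbb{Z}^d\times\mathbb{N}$ with law $\mathsf{f}$ has a non-degenerate $(d+1)$-dimensional distribution, the random walk $\mathsf{S}_N=\sum_{i=1}^N\mathsf{U}_i$ with i.i.d. steps $\mathsf{U}_i\sim\mathsf{f}$ is aperiodic (its support is not contained in a proper sub-lattice), and there exist $C<\infty,\nu>0$ with $\mathsf{f}(\mathsf{x},n)\le Ce^{-\nu(|\mathsf{x}|+n)}$ for all $(\mathsf{x},n)$. Define $F(\xi,\lambda)=\log\sum_{\mathsf{x},n}e^{\mathsf{x}\cdot\xi-\lambda n}\mathsf{f}(\mathsf{x},n)$ for $(\xi,\lambda)\in\mathbb{C}^d\times\mathbb{C}$ near $0$; it is analytic on a small polydisc around $0$, and $\lambda(\xi)$ denotes the analytic function on a small polydisc around $0\in\mathbb{C}^d$ given by the implicit function theorem, characterized by $F(\xi,\lambda)=0\Leftrightarrow\lambda=\lambda(\xi)$ near the origin (so $\lambda(0)=0$). Set $\mathsf{f}_\xi(\mathsf{x},n)=\mathsf{f}(\mathsf{x},n)e^{\xi\cdot\mathsf{x}-\lambda(\xi)n}$ and $\mathsf{f}_\xi(n)=\sum_{\mathsf{x}}\mathsf{f}_\xi(\mathsf{x},n)$. *)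

theory Defs
  imports "HOL-Analysis.Analysis"
begin

definition dotc :: "int ^ 'd \<Rightarrow> complex ^ 'd \<Rightarrow> complex" where
  "dotc x \<xi> = (\<Sum>i\<in>UNIV. of_int (x $ i) * \<xi> $ i)"

definition F_fun :: "(int ^ 'd \<Rightarrow> nat \<Rightarrow> real) \<Rightarrow> complex ^ 'd \<Rightarrow> complex \<Rightarrow> complex" where
  "F_fun f \<xi> \<mu> = Ln (infsum (\<lambda>(x, n). complex_of_real (f x n) * exp (dotc x \<xi> - \<mu> * of_nat n)) UNIV)"

definition f_xi :: "(int ^ 'd \<Rightarrow> nat \<Rightarrow> real) \<Rightarrow> (complex ^ 'd \<Rightarrow> complex) \<Rightarrow> complex ^ 'd \<Rightarrow> nat \<Rightarrow> complex" where
  "f_xi f lam \<xi> n = infsum (\<lambda>x. complex_of_real (f x n) * exp (dotc x \<xi> - lam \<xi> * of_nat n)) UNIV"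

definition fhat :: "(int ^ 'd \<Rightarrow> nat \<Rightarrow> real) \<Rightarrow> (complex ^ 'd \<Rightarrow> complex) \<Rightarrow> complex ^ 'd \<Rightarrow> complex \<Rightarrow> complex" where
  "fhat f lam \<xi> z = (\<Sum>n. f_xi f lam \<xi> n * z ^ n)"

definition nondegenerate :: "(int ^ 'd \<Rightarrow> nat \<Rightarrow> real) \<Rightarrow> bool" where
  "nondegenerate f \<longleftrightarrow>
     \<not> (\<exists>(a :: real ^ 'd) (b :: real) (c :: real). (a \<noteq> 0 \<or> b \<noteq> 0) \<and>
          (\<forall>x n. f x n > 0 \<longrightarrow> (\<Sum>i\<in>UNIV. a $ i * of_int (x $ i)) + b * real n = c))"

definition aperiodic :: "(int ^ 'd \<Rightarrow> nat \<Rightarrow> real) \<Rightarrow> bool" where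
  "aperiodic f \<longleftrightarrow>
     (\<forall>(v :: int ^ 'd) (m :: int). \<exists>S c. finite S \<and> S \<subseteq> {(x, n). f x n > 0} \<and>
        (\<forall>i. v $ i = (\<Sum>s\<in>S. c s * (fst s) $ i)) \<and> m = (\<Sum>s\<in>S. c s * int (snd s)))"

end

theory Submission
  imports Defs
begin


lemma unit_mod: fixes u :: complex assumes "norm u \<le> 1" "Re u = 1" shows "u = 1"
proof -
  have "(norm u)^2 = (Re u)^2 + (Im u)^2" by (simp add: cmod_power2)
  moreover have "(norm u)^2 \<le> 1" using assms(1) by (simp add: power_le_one)
  ultimately have "Im u = 0" using assms(2) by simp
  thus ?thesis using assms(2) by (simp add: complex_eq_iff)
qed

lemma powi_prod_one:
  fixes w :: complex
  assumes "finite S" "w \<noteq> 0" "\<And>s. s \<in> S \<Longrightarrow> w ^ (tm s) = 1"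
  shows "w powi (\<Sum>s\<in>S. c s * int (tm s)) = 1"
  using assms
proof (induction S rule: finite_induct)
  case empty then show ?case by simp
next
  case (insert s S)
  have "w powi (\<Sum>s\<in>insert s S. c s * int (tm s)) = w powi (c s * int (tm s)) * w powi (\<Sum>s\<in>S. c s * int (tm s))"
    using insert by (simp add: power_int_add)
  also have "w powi (c s * int (tm s)) = (w ^ tm s) powi (c s)"
    by (simp add: power_int_power mult.commute)
  also have "\<dots> = 1" using insert by simp
  finally show ?case using insert by simp
qed

lemma unit_disc_root:
  fixes p :: "nat \<Rightarrow> real" and w :: complex
  assumes p_nn: "\<And>n. p n \<ge> 0" and p0: "p 0 = 0" and psum: "p sums 1"
    and S: "finite S" "\<And>s. s \<in> S \<Longrightarrow> p (tm s) > 0" "(\<Sum>s\<in>S. c s * int (tm s)) = 1"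
    and w: "norm w \<le> 1" and eq: "(\<Sum>n. of_real (p n) * w ^ n) = 1"
  shows "w = 1"
proof -
  have sw: "summable (\<lambda>n. of_real (p n) * w ^ n)"
  proof (rule summable_comparison_test'[of p 0])
    show "summable p" using psum by (simp add: sums_iff)
    fix n show "norm (of_real (p n) * w ^ n) \<le> p n"
      using p_nn[of n] w by (simp add: norm_mult norm_power mult_left_le power_le_one)
  qed
  have "(\<lambda>n. of_real (p n) * w ^ n) sums 1" using sw eq by (metis summable_sums)
  hence s1: "(\<lambda>n. Re (of_real (p n) * w ^ n)) sums 1" using sums_Re by fastforce
  have s2: "(\<lambda>n. p n * (1 - Re (w ^ n))) sums 0"
  proof -
    have "(\<lambda>n. p n - Re (of_real (p n) * w ^ n)) sums (1 - 1)" by (rule sums_diff[OF psum s1])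
    thus ?thesis by (simp add: algebra_simps)
  qed
  have nn: "\<And>n. 0 \<le> p n * (1 - Re (w ^ n))"
  proof -
    fix n
    have "Re (w ^ n) \<le> norm (w^n)" by (rule complex_Re_le_cmod)
    also have "\<dots> \<le> 1" using w by (simp add: norm_power power_le_one)
    finally show "0 \<le> p n * (1 - Re (w ^ n))" using p_nn[of n] by simp
  qed
  have zero: "\<And>n. p n * (1 - Re (w ^ n)) = 0"
    using suminf_eq_zero_iff[of "\<lambda>n. p n * (1 - Re (w ^ n))"] s2 nn
    by (metis sums_summable sums_unique)
  have roots: "w ^ tm s = 1" if "s \<in> S" for s
  proof (rule unit_mod)
    show "norm (w ^ tm s) \<le> 1" using w by (simp add: norm_power power_le_one)
    show "Re (w ^ tm s) = 1" using zero[of "tm s"] S(2)[OF that] by simp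
  qed
  have "S \<noteq> {}" using S(3) by auto
  then obtain s0 where s0: "s0 \<in> S" by blast
  have "w \<noteq> 0"
  proof
    assume "w = 0"
    have "tm s0 \<noteq> 0" using S(2)[OF s0] p0 by (metis less_irrefl)
    thus False using roots[OF s0] \<open>w = 0\<close> by (simp add: power_0_left)
  qed
  have "w powi (\<Sum>s\<in>S. c s * int (tm s)) = 1" by (rule powi_prod_one[OF S(1) \<open>w \<noteq> 0\<close> roots])
  thus ?thesis using S(3) by simp
qed

lemma power_lipschitz:
  fixes z w :: complex and R :: real
  assumes "norm z \<le> R" "norm w \<le> R" "R \<ge> 1"
  shows "norm (z ^ n - w ^ n) \<le> (real n + 1) * R ^ n * norm (z - w)"
proof -
  have "norm (z ^ n - w ^ n) \<le> (real n * R ^ (n - 1)) * norm (z - w)"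
  proof (rule field_differentiable_bound[where S = "cball 0 R" and f' = "\<lambda>u. of_nat n * u ^ (n - 1)"])
    show "convex (cball (0::complex) R)" by simp
    fix u :: complex assume u: "u \<in> cball 0 R"
    show "((\<lambda>u. u ^ n) has_field_derivative of_nat n * u ^ (n - 1)) (at u within cball 0 R)"
      by (rule derivative_eq_intros refl | simp)+
    have "norm u \<le> R" using u by simp
    hence "norm u ^ (n - 1) \<le> R ^ (n - 1)" by (simp add: power_mono)
    thus "norm (of_nat n * u ^ (n - 1)) \<le> real n * R ^ (n - 1)"
      by (simp add: norm_mult norm_power mult_left_mono)
  qed (use assms in auto)
  also have "real n * R ^ (n - 1) \<le> (real n + 1) * R ^ n"
  proof -
    have "R ^ (n - 1) \<le> R ^ n" using assms(3) by (simp add: power_increasing)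
    hence "real n * R ^ (n - 1) \<le> real n * R ^ n" by (simp add: mult_left_mono)
    also have "\<dots> \<le> (real n + 1) * R ^ n" using assms(3) by simp
    finally show ?thesis .
  qed
  hence "(real n * R ^ (n - 1)) * norm (z - w) \<le> (real n + 1) * R ^ n * norm (z - w)"
    by (simp add: mult_right_mono)
  finally show ?thesis .
qed



lemma suminf_norm_bound:
  fixes f :: "nat \<Rightarrow> 'a::banach"
  assumes "summable g" "\<And>n. norm (f n) \<le> g n"
  shows "summable f" "norm (suminf f) \<le> suminf g"
proof -
  have sn: "summable (\<lambda>n. norm (f n))"
    by (rule summable_comparison_test'[OF assms(1)]) (use assms(2) in simp)
  thus "summable f" by (rule summable_norm_cancel)
  have "norm (suminf f) \<le> (\<Sum>n. norm (f n))" by (rule summable_norm[OF sn])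
  also have "\<dots> \<le> suminf g" by (rule suminf_le[OF _ sn assms(1)]) (use assms(2) in auto)
  finally show "norm (suminf f) \<le> suminf g" .
qed

lemma norm_z_minus_proj:
  fixes z :: complex assumes "norm z > 1"
  shows "norm (z - z / of_real (norm z)) = norm z - 1"
proof -
  have "z - z / of_real (norm z) = z * of_real (1 - 1 / norm z)"
    using assms by (simp add: field_simps)
  hence "norm (z - z / of_real (norm z)) = norm z * \<bar>1 - 1 / norm z\<bar>"
    by (metis norm_mult norm_of_real)
  also have "\<bar>1 - 1 / norm z\<bar> = 1 - 1 / norm z" using assms by (intro abs_of_nonneg) (simp add: divide_le_eq_1)
  also have "norm z * (1 - 1 / norm z) = norm z - 1" using assms by (auto simp add: field_simps)
  finally show ?thesis .
qed

lemma norm_geom_sum_bound: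
  fixes z :: complex assumes "norm z \<le> R" "R \<ge> 1"
  shows "norm (\<Sum>i<n. z ^ i) \<le> (real n + 1) * R ^ n"
proof -
  have "norm (\<Sum>i<n. z ^ i) \<le> (\<Sum>i<n. norm (z ^ i))" by (rule norm_sum)
  also have "\<dots> \<le> (\<Sum>i<n. R ^ n)"
  proof (rule sum_mono)
    fix i assume "i \<in> {..<n}"
    have "norm (z ^ i) \<le> R ^ i" using assms by (simp add: norm_power power_mono)
    also have "\<dots> \<le> R ^ n" using assms \<open>i \<in> {..<n}\<close> by (simp add: power_increasing)
    finally show "norm (z ^ i) \<le> R ^ n" .
  qed
  also have "\<dots> = real n * R ^ n" by simp
  also have "\<dots> \<le> (real n + 1) * R ^ n" using assms by simp
  finally show ?thesis .
qed

lemma norm_geom_sum_minus_bound: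
  fixes z :: complex assumes "norm z \<le> R" "R \<ge> 1"
  shows "norm ((\<Sum>i<n. z ^ i) - of_nat n) \<le> (real n + 1)^2 * R ^ n * norm (z - 1)"
proof -
  have "(\<Sum>i<n. z ^ i) - of_nat n = (\<Sum>i<n. z ^ i - 1 ^ i)" by (simp add: sum_subtractf)
  hence "norm ((\<Sum>i<n. z ^ i) - of_nat n) \<le> (\<Sum>i<n. norm (z ^ i - 1 ^ i))" by (simp add: norm_sum)
  also have "\<dots> \<le> (\<Sum>i<n. (real n + 1) * R ^ n * norm (z - 1))"
  proof (rule sum_mono)
    fix i assume i: "i \<in> {..<n}"
    have "norm (z ^ i - 1 ^ i) \<le> (real i + 1) * R ^ i * norm (z - 1)"
      by (rule power_lipschitz) (use assms in auto)
    also have "\<dots> \<le> (real n + 1) * R ^ n * norm (z - 1)"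
    proof (rule mult_right_mono[OF mult_mono])
      show "real i + 1 \<le> real n + 1" using i by simp
      show "R ^ i \<le> R ^ n" using assms i by (simp add: power_increasing)
    qed (use assms in auto)
    finally show "norm (z ^ i - 1 ^ i) \<le> (real n + 1) * R ^ n * norm (z - 1)" .
  qed
  also have "\<dots> = real n * ((real n + 1) * R ^ n * norm (z - 1))" by simp
  also have "\<dots> \<le> (real n + 1) * ((real n + 1) * R ^ n * norm (z - 1))"
    by (rule mult_right_mono) (use assms in auto)
  also have "\<dots> = (real n + 1)^2 * R ^ n * norm (z - 1)" by (simp add: power2_eq_square)
  finally show ?thesis .
qed



lemma mul_n1: fixes x R :: real assumes "x \<ge> 0" "R \<ge> 0"
  shows "x * R ^ n \<le> x * (real n + 1) * R ^ n"
proof -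
  have "x * R ^ n * 1 \<le> x * R ^ n * (real n + 1)"
    using assms by (intro mult_left_mono) auto
  thus ?thesis by (simp add: algebra_simps)
qed

lemma ps_abstract:
  fixes p :: "nat \<Rightarrow> real" and R :: real
  assumes p_nn: "\<And>n. p n \<ge> 0" and p0: "p 0 = 0" and psum: "p sums 1"
    and R: "R > 1" and psumR: "summable (\<lambda>n. p n * (real n + 1)^2 * R^n)"
    and S: "finite S" "\<And>s. s \<in> S \<Longrightarrow> p (tm s) > 0" "(\<Sum>s\<in>S. c s * int (tm s)) = 1"
  shows "\<exists>\<epsilon>>0. \<exists>\<kappa>>0. 1 + \<epsilon> < R \<and> (\<forall>a::nat\<Rightarrow>complex. a 0 = 0 \<longrightarrow> a sums 1 \<longrightarrow>
     summable (\<lambda>n. norm (a n - of_real (p n)) * (real n + 1) * R^n) \<longrightarrow>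
     (\<Sum>n. norm (a n - of_real (p n)) * (real n + 1) * R^n) \<le> \<kappa> \<longrightarrow>
     ((\<forall>z\<in>cball 0 (1+\<epsilon>). (\<Sum>n. a n * z^n) = 1 \<longleftrightarrow> z = 1) \<and> deriv (\<lambda>z. \<Sum>n. a n * z^n) 1 \<noteq> 0))"
proof -
  define L where "L = (\<Sum>n. p n * (real n + 1)^2 * R^n)"
  have R1: "R \<ge> 1" using R by simp
  have pw2: "p n * (real n + 1) * R ^ n \<le> p n * (real n + 1)^2 * R^n" for n
  proof -
    have "(real n + 1) \<le> (real n + 1)^2" by (simp add: power2_eq_square)
    thus ?thesis using p_nn[of n] R by (intro mult_right_mono mult_left_mono) auto
  qed
  have pw1: "p n * R ^ n \<le> p n * (real n + 1) * R ^ n" for n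
  proof -
    have "p n * R ^ n * 1 \<le> p n * R ^ n * (real n + 1)"
      using p_nn[of n] R by (intro mult_left_mono) auto
    thus ?thesis by (simp add: algebra_simps)
  qed
  have L_nn: "L \<ge> 0" unfolding L_def using p_nn R by (intro suminf_nonneg psumR) auto
  have sum1: "summable (\<lambda>n. p n * (real n + 1) * R ^ n)"
    by (rule summable_comparison_test'[OF psumR]) (use pw2 p_nn R in auto)
  have sum0: "summable (\<lambda>n. p n * R ^ n)"
    by (rule summable_comparison_test'[OF sum1]) (use pw1 p_nn R in auto)
  have sumL1: "(\<Sum>n. p n * (real n + 1) * R ^ n) \<le> L"
    unfolding L_def by (rule suminf_le[OF pw2 sum1 psumR])
  define r where "r = 1 / (4 * (L + 1))"
  have r_pos: "r > 0" using L_nn by (simp add: r_def)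
  have Lr: "L * r \<le> 1/4" using L_nn by (simp add: r_def field_simps)
  define P where "P = (\<lambda>z::complex. \<Sum>n. of_real (p n) * z ^ n)"
  define Kset where "Kset = cball (0::complex) 1 - ball 1 (r/2)"
  have Kc: "compact Kset" unfolding Kset_def by (intro compact_diff) auto
  have "r / 2 \<le> 2" using L_nn by (simp add: r_def field_simps)
  hence Kne: "-1 \<in> Kset" unfolding Kset_def by (simp add: dist_norm)
  have Pcont: "continuous_on Kset (\<lambda>w. norm (P w - 1))"
  proof -
    have sK: "summable (\<lambda>n. of_real (p n) * (of_real R :: complex) ^ n)"
      using sum0 by (simp flip: of_real_power of_real_mult)
    have "isCont P w" if "w \<in> Kset" for w
    proof -
      have "norm w < norm (of_real R :: complex)" using that R by (simp add: Kset_def)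
      thus ?thesis unfolding P_def by (rule isCont_powser[OF sK])
    qed
    hence "continuous_on Kset P" by (intro continuous_at_imp_continuous_on) auto
    thus ?thesis by (intro continuous_intros)
  qed
  obtain w0 where w0: "w0 \<in> Kset" "\<And>w. w \<in> Kset \<Longrightarrow> norm (P w0 - 1) \<le> norm (P w - 1)"
    using continuous_attains_inf[OF Kc _ Pcont] Kne by blast
  define cc where "cc = norm (P w0 - 1)"
  have cc_pos: "cc > 0"
  proof (rule ccontr)
    assume "\<not> cc > 0"
    hence "P w0 = 1" by (simp add: cc_def)
    hence "w0 = 1" using unit_disc_root[OF p_nn p0 psum S, of w0] w0(1)
      by (simp add: Kset_def P_def)
    thus False using w0(1) r_pos by (simp add: Kset_def)
  qed
  define \<epsilon> where "\<epsilon> = min ((R - 1)/2) (min (r/2) (cc / (3 * (L + 1))))"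
  define \<kappa> where "\<kappa> = min (1/4) (cc / 3)"
  have eps_pos: "\<epsilon> > 0" using R r_pos cc_pos L_nn by (simp add: \<epsilon>_def)
  have kap_pos: "\<kappa> > 0" using cc_pos by (simp add: \<kappa>_def)
  have "\<epsilon> \<le> (R - 1)/2" unfolding \<epsilon>_def by (rule min.cobounded1)
  hence epsR: "1 + \<epsilon> < R" using R by simp
  have Leps: "L * \<epsilon> \<le> cc / 3"
  proof -
    have "L * \<epsilon> \<le> L * (cc / (3 * (L + 1)))" using L_nn by (intro mult_left_mono) (auto simp: \<epsilon>_def)
    also have "\<dots> \<le> cc / 3" using L_nn cc_pos by (simp add: field_simps)
    finally show ?thesis .
  qed
  show ?thesis
  proof (rule exI[of _ \<epsilon>], rule conjI[OF eps_pos], rule exI[of _ \<kappa>], rule conjI[OF kap_pos],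
      rule conjI[OF epsR], intro allI impI conjI)
    fix a :: "nat \<Rightarrow> complex"
    assume a0: "a 0 = 0" and asum: "a sums 1"
      and dsum: "summable (\<lambda>n. norm (a n - of_real (p n)) * (real n + 1) * R^n)"
      and dle: "(\<Sum>n. norm (a n - of_real (p n)) * (real n + 1) * R^n) \<le> \<kappa>"
    define A where "A = (\<lambda>z. \<Sum>n. a n * z ^ n)"
    have dnn: "0 \<le> norm (a n - of_real (p n)) * (real n + 1) * R^n" for n using R by simp
    have Gsum: "summable (\<lambda>n. norm (a n - of_real (p n)) * (real n + 1) * R^n + p n * (real n + 1)^2 * R^n)"
      by (intro summable_add dsum psumR)
    have abound: "norm (a n) * (real n + 1) * R ^ n \<le> norm (a n - of_real (p n)) * (real n + 1) * R^n + p n * (real n + 1)^2 * R^n" for n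
    proof -
      have "norm (a n) \<le> norm (a n - of_real (p n)) + p n"
        using norm_triangle_ineq[of "a n - of_real (p n)" "of_real (p n)"] p_nn[of n] by simp
      hence "norm (a n) * (real n + 1) * R ^ n \<le> (norm (a n - of_real (p n)) + p n) * (real n + 1) * R ^ n"
        using R by (intro mult_right_mono) auto
      also have "\<dots> = norm (a n - of_real (p n)) * (real n + 1) * R^n + p n * (real n + 1) * R ^ n"
        by (simp add: algebra_simps)
      also have "\<dots> \<le> norm (a n - of_real (p n)) * (real n + 1) * R^n + p n * (real n + 1)^2 * R^n"
        using pw2[of n] by simp
      finally show ?thesis .
    qed
    have an_sum: "summable (\<lambda>n. norm (a n) * (real n + 1) * R ^ n)"
      proof (rule summable_comparison_test'[OF Gsum])
      fix n :: nat
      have "0 \<le> norm (a n) * (real n + 1) * R ^ n" using R by simp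
      thus "norm (norm (a n) * (real n + 1) * R ^ n) \<le> norm (a n - of_real (p n)) * (real n + 1) * R^n + p n * (real n + 1)^2 * R^n"
        using abound[of n] by simp
    qed
    have zpow: "norm z ^ n \<le> R ^ n" if "norm z \<le> R" for z :: complex and n
      using that by (simp add: power_mono)
    have Asum: "summable (\<lambda>n. a n * z ^ n)" if "norm z \<le> R" for z
    proof (rule suminf_norm_bound(1)[OF an_sum])
      fix n
      have "norm (a n * z ^ n) \<le> norm (a n) * R ^ n"
        using zpow[OF that, of n] by (simp add: norm_mult norm_power mult_left_mono)
      also have "\<dots> \<le> norm (a n) * (real n + 1) * R ^ n" using R by (intro mul_n1) auto
      finally show "norm (a n * z ^ n) \<le> norm (a n) * (real n + 1) * R ^ n" .
    qed
    have Psum: "summable (\<lambda>n. of_real (p n) * z ^ n)" if "norm z \<le> R" for z :: complex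
    proof (rule suminf_norm_bound(1)[OF sum0])
      fix n show "norm (of_real (p n) * z ^ n) \<le> p n * R ^ n"
        using zpow[OF that, of n] p_nn[of n] by (simp add: norm_mult norm_power mult_left_mono)
    qed
    have AP: "norm (A z - P z) \<le> \<kappa>" if "norm z \<le> R" for z
    proof -
      have "A z - P z = (\<Sum>n. (a n - of_real (p n)) * z ^ n)"
        unfolding A_def P_def using suminf_diff[OF Asum[OF that] Psum[OF that]]
        by (simp add: algebra_simps)
      also have "norm \<dots> \<le> (\<Sum>n. norm (a n - of_real (p n)) * (real n + 1) * R^n)"
      proof (rule suminf_norm_bound(2)[OF dsum])
        fix n
        have "norm ((a n - of_real (p n)) * z ^ n) \<le> norm (a n - of_real (p n)) * R ^ n"
          using zpow[OF that, of n] by (simp add: norm_mult norm_power mult_left_mono)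
        also have "\<dots> \<le> norm (a n - of_real (p n)) * (real n + 1) * R ^ n" using R by (intro mul_n1) auto
        finally show "norm ((a n - of_real (p n)) * z ^ n) \<le> norm (a n - of_real (p n)) * (real n + 1) * R ^ n" .
      qed
      finally show ?thesis using dle by simp
    qed
    have A1: "A 1 = 1" unfolding A_def using asum by (simp add: sums_iff)
    have near: "A z - 1 = (z - 1) * (\<Sum>n. a n * (\<Sum>i<n. z ^ i)) \<and> (\<Sum>n. a n * (\<Sum>i<n. z ^ i)) \<noteq> 0"
      if zR: "norm z \<le> R" and zr: "norm (z - 1) \<le> r" for z
    proof
      define h where "h n = (\<Sum>i<n. z ^ i)" for n
      have hb: "norm (h n) \<le> (real n + 1) * R ^ n" for n
        unfolding h_def by (rule norm_geom_sum_bound[OF zR R1])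
      have hb2: "norm (h n - of_nat n) \<le> (real n + 1)^2 * R ^ n * norm (z - 1)" for n
        unfolding h_def by (rule norm_geom_sum_minus_bound[OF zR R1])
      have ah_sum: "summable (\<lambda>n. a n * h n)"
      proof (rule suminf_norm_bound(1)[OF an_sum])
        fix n show "norm (a n * h n) \<le> norm (a n) * (real n + 1) * R ^ n"
          using hb[of n] by (simp add: norm_mult mult_left_mono mult.assoc)
      qed
      have "A z - 1 = (\<Sum>n. a n * z ^ n - a n)"
        unfolding A_def using suminf_diff[OF Asum[OF zR] sums_summable[OF asum]] asum
        by (simp add: sums_iff)
      also have "\<dots> = (\<Sum>n. (z - 1) * (a n * h n))"
      proof (intro suminf_cong)
        fix n
        have e1: "z^n - 1 = (z - 1) * h n" unfolding h_def by (rule power_diff_1_eq)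
        have "a n * z ^ n - a n = a n * (z^n - 1)" by (simp add: algebra_simps)
        also have "\<dots> = (z - 1) * (a n * h n)" by (simp add: e1)
        finally show "a n * z ^ n - a n = (z - 1) * (a n * h n)" .
      qed
      also have "\<dots> = (z - 1) * (\<Sum>n. a n * h n)" by (rule suminf_mult[OF ah_sum])
      finally show "A z - 1 = (z - 1) * (\<Sum>n. a n * (\<Sum>i<n. z ^ i))" by (simp add: h_def A_def)
      have bnd1: "\<And>n. norm ((a n - of_real (p n)) * h n) \<le> norm (a n - of_real (p n)) * (real n + 1) * R^n"
        using hb by (simp add: norm_mult mult_left_mono mult.assoc)
      have s1: "summable (\<lambda>n. (a n - of_real (p n)) * h n)"
        by (rule suminf_norm_bound(1)[OF dsum bnd1])
      have b1: "norm (\<Sum>n. (a n - of_real (p n)) * h n) \<le> (\<Sum>n. norm (a n - of_real (p n)) * (real n + 1) * R^n)"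
        by (rule suminf_norm_bound(2)[OF dsum bnd1])
      have bnd2: "\<And>n. norm (of_real (p n) * (h n - of_nat n)) \<le> p n * (real n + 1)^2 * R^n * norm (z - 1)"
        using hb2 p_nn by (simp add: norm_mult mult_left_mono mult.assoc)
      have sm2: "summable (\<lambda>n. p n * (real n + 1)^2 * R^n * norm (z - 1))"
        by (intro summable_mult2 psumR)
      have s2: "summable (\<lambda>n. of_real (p n) * (h n - of_nat n))"
        by (rule suminf_norm_bound(1)[OF sm2 bnd2])
      have b2: "norm (\<Sum>n. of_real (p n) * (h n - of_nat n)) \<le> (\<Sum>n. p n * (real n + 1)^2 * R^n * norm (z - 1))"
        by (rule suminf_norm_bound(2)[OF sm2 bnd2])
      have b2': "norm (\<Sum>n. of_real (p n) * (h n - of_nat n)) \<le> 1/4"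
      proof -
        have "(\<Sum>n. p n * (real n + 1)^2 * R^n * norm (z - 1)) = L * norm (z - 1)"
          unfolding L_def by (rule suminf_mult2[symmetric, OF psumR])
        also have "\<dots> \<le> L * r" using zr L_nn by (intro mult_left_mono)
        finally show ?thesis using b2 Lr by simp
      qed
      have pn_sum: "summable (\<lambda>n. p n * real n)"
      proof (rule summable_comparison_test'[OF sum1])
        fix n :: nat
        have "p n * real n \<le> p n * (real n + 1)" using p_nn[of n] by (intro mult_left_mono) auto
        also have "\<dots> = p n * (real n + 1) * 1" by simp
        also have "\<dots> \<le> p n * (real n + 1) * R ^ n"
          using p_nn[of n] R by (intro mult_left_mono) (auto simp: one_le_power)
        finally show "norm (p n * real n) \<le> p n * (real n + 1) * R ^ n" using p_nn[of n] by simp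
      qed
      have pn_ge: "(\<Sum>n. p n * real n) \<ge> 1"
      proof -
        have "(\<Sum>n. p n) \<le> (\<Sum>n. p n * real n)"
        proof (rule suminf_le[OF _ sums_summable[OF psum] pn_sum])
          fix n show "p n \<le> p n * real n"
          proof (cases n)
            case (Suc m)
            have "p n * 1 \<le> p n * real n" using p_nn[of n] Suc by (intro mult_left_mono) auto
            thus ?thesis by simp
          qed (use p0 in simp)
        qed
        thus ?thesis using psum by (simp add: sums_iff)
      qed
      have fe: "(\<lambda>n. of_real (p n) * (of_nat n :: complex)) = (\<lambda>n. of_real (p n * real n))"
        by (simp add: fun_eq_iff)
      have s3: "summable (\<lambda>n. of_real (p n) * (of_nat n :: complex))"
        unfolding fe using pn_sum by (simp only: summable_complex_of_real)
      have eq3: "(\<Sum>n. of_real (p n) * (of_nat n :: complex)) = of_real (\<Sum>n. p n * real n)"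
      proof -
        have "(\<Sum>n. of_real (p n * real n)) = (of_real (\<Sum>n. p n * real n) :: complex)"
          by (rule suminf_of_real[OF pn_sum, symmetric])
        thus ?thesis by (simp only: fe)
      qed
      have "(\<Sum>n. a n * h n) = (\<Sum>n. (a n - of_real (p n)) * h n) + (\<Sum>n. of_real (p n) * (h n - of_nat n)) + (\<Sum>n. of_real (p n) * of_nat n)"
      proof -
        have "(\<Sum>n. (a n - of_real (p n)) * h n) + (\<Sum>n. of_real (p n) * (h n - of_nat n)) + (\<Sum>n. of_real (p n) * of_nat n)
          = (\<Sum>n. (a n - of_real (p n)) * h n + of_real (p n) * (h n - of_nat n) + of_real (p n) * of_nat n)"
          using suminf_add[OF s1 s2] suminf_add[OF summable_add[OF s1 s2] s3] by simp
        also have "\<dots> = (\<Sum>n. a n * h n)" by (intro suminf_cong) (simp add: algebra_simps)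
        finally show ?thesis by simp
      qed
      hence "norm (\<Sum>n. a n * h n) \<ge> norm (of_real (\<Sum>n. p n * real n) :: complex) - norm (\<Sum>n. (a n - of_real (p n)) * h n) - norm (\<Sum>n. of_real (p n) * (h n - of_nat n))"
      proof -
        assume eqs: "(\<Sum>n. a n * h n) = (\<Sum>n. (a n - of_real (p n)) * h n) + (\<Sum>n. of_real (p n) * (h n - of_nat n)) + (\<Sum>n. of_real (p n) * of_nat n)"
        have "of_real (\<Sum>n. p n * real n) = ((\<Sum>n. a n * h n) - (\<Sum>n. (a n - of_real (p n)) * h n)) - (\<Sum>n. of_real (p n) * (h n - of_nat n))"
          using eqs eq3 by (simp add: algebra_simps)
        hence "norm (of_real (\<Sum>n. p n * real n) :: complex) \<le> norm ((\<Sum>n. a n * h n) - (\<Sum>n. (a n - of_real (p n)) * h n)) + norm (\<Sum>n. of_real (p n) * (h n - of_nat n))"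
          by (metis norm_triangle_ineq4)
        also have "norm ((\<Sum>n. a n * h n) - (\<Sum>n. (a n - of_real (p n)) * h n)) \<le> norm (\<Sum>n. a n * h n) + norm (\<Sum>n. (a n - of_real (p n)) * h n)"
          by (rule norm_triangle_ineq4)
        finally show ?thesis by simp
      qed
      moreover have "norm (of_real (\<Sum>n. p n * real n) :: complex) \<ge> 1" using pn_ge by simp
      ultimately have "norm (\<Sum>n. a n * h n) \<ge> 1/2" using b1 b2' dle by (simp add: \<kappa>_def)
      thus "(\<Sum>n. a n * (\<Sum>i<n. z ^ i)) \<noteq> 0" unfolding h_def by auto
    qed
    show "\<forall>z\<in>cball 0 (1 + \<epsilon>). (\<Sum>n. a n * z ^ n) = 1 \<longleftrightarrow> z = 1"
    proof
      fix z :: complex assume z: "z \<in> cball 0 (1 + \<epsilon>)"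
      have zR: "norm z \<le> R" using z epsR by simp
      show "(\<Sum>n. a n * z ^ n) = 1 \<longleftrightarrow> z = 1"
      proof
        assume Az: "(\<Sum>n. a n * z ^ n) = 1"
        show "z = 1"
        proof (rule ccontr)
          assume "z \<noteq> 1"
          show False
          proof (cases "norm (z - 1) \<le> r")
            case True
            from near[OF zR True] Az \<open>z \<noteq> 1\<close> show False by (simp add: A_def)
          next
            case False
            define w where "w = (if norm z \<le> 1 then z else z / of_real (norm z))"
            have wn: "norm w \<le> 1" by (auto simp: w_def norm_divide)
            have zw: "norm (z - w) \<le> \<epsilon>"
              using z norm_z_minus_proj[of z] by (auto simp: w_def eps_pos less_imp_le)
            have "norm (w - 1) \<ge> norm (z - 1) - norm (z - w)"
              using norm_triangle_ineq[of "z - w" "w - 1"] by simp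
            moreover have "\<epsilon> \<le> r/2" unfolding \<epsilon>_def by linarith
            ultimately have "norm (w - 1) \<ge> r / 2" using False zw by simp
            hence wK: "w \<in> Kset" using wn by (simp add: Kset_def dist_norm norm_minus_commute)
            have c1: "cc \<le> norm (P w - 1)" using w0(2)[OF wK] by (simp add: cc_def)
            have wR: "norm w \<le> R" using wn R by simp
            have "P z - P w = (\<Sum>n. of_real (p n) * (z ^ n - w ^ n))"
              unfolding P_def using suminf_diff[OF Psum[OF zR] Psum[OF wR]] by (simp add: algebra_simps)
            also have "norm \<dots> \<le> (\<Sum>n. p n * (real n + 1) * R ^ n * norm (z - w))"
            proof (rule suminf_norm_bound(2))
              show "summable (\<lambda>n. p n * (real n + 1) * R ^ n * norm (z - w))" by (intro summable_mult2 sum1)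
              fix n
              have "norm (z ^ n - w ^ n) \<le> (real n + 1) * R ^ n * norm (z - w)"
                by (rule power_lipschitz[OF zR wR R1])
              thus "norm (of_real (p n) * (z ^ n - w ^ n)) \<le> p n * (real n + 1) * R ^ n * norm (z - w)"
                using p_nn[of n] by (simp add: norm_mult mult_left_mono mult.assoc)
            qed
            also have "\<dots> = (\<Sum>n. p n * (real n + 1) * R ^ n) * norm (z - w)"
              by (rule suminf_mult2[symmetric, OF sum1])
            also have "\<dots> \<le> L * \<epsilon>"
              using sumL1 zw L_nn by (intro mult_mono) (auto intro!: suminf_nonneg sum1 simp: p_nn R1)
            finally have c2: "norm (P z - P w) \<le> cc / 3" using Leps by simp
            have c3: "norm (A z - P z) \<le> cc / 3" using AP[OF zR] by (simp add: \<kappa>_def)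
            have "P w - 1 = ((A z - 1) - (A z - P z)) - (P z - P w)" by simp
            hence "norm (P w - 1) \<le> norm ((A z - 1) - (A z - P z)) + norm (P z - P w)"
              by (metis norm_triangle_ineq4)
            also have "norm ((A z - 1) - (A z - P z)) \<le> norm (A z - 1) + norm (A z - P z)"
              by (rule norm_triangle_ineq4)
            finally have "norm (A z - 1) \<ge> norm (P w - 1) - norm (P z - P w) - norm (A z - P z)" by simp
            hence "norm (A z - 1) > 0" using c1 c2 c3 cc_pos by linarith
            thus False using Az by (simp add: A_def)
          qed
        qed
      next
        assume "z = 1" thus "(\<Sum>n. a n * z ^ n) = 1" using A1 by (simp add: A_def)
      qed
    qed
    have K: "norm (1::complex) < norm (of_real R :: complex)" using R by simp
    have sK: "summable (\<lambda>n. a n * (of_real R) ^ n)" by (rule Asum) (use R in simp)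
    have "((\<lambda>z. \<Sum>n. a n * z ^ n) has_field_derivative (\<Sum>n. diffs a n * 1 ^ n)) (at 1)"
      by (rule termdiffs_strong[OF sK K])
    hence dv: "deriv (\<lambda>z. \<Sum>n. a n * z ^ n) 1 = (\<Sum>n. diffs a n * 1 ^ n)" by (rule DERIV_imp_deriv)
    have "summable (\<lambda>n. diffs a n * 1 ^ n)"
      by (rule termdiff_converges[of 1 R]) (use R Asum in auto)
    hence "(\<lambda>n. of_nat n * a n * 1 ^ (n - Suc 0)) sums (\<Sum>n. diffs a n * 1 ^ n)"
      by (rule diffs_equiv)
    hence "(\<Sum>n. diffs a n * 1 ^ n) = (\<Sum>n. a n * (\<Sum>i<n. (1::complex) ^ i))"
      by (simp add: sums_iff mult.commute)
    moreover have "(\<Sum>n. a n * (\<Sum>i<n. (1::complex) ^ i)) \<noteq> 0"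
      using near[of 1] R r_pos by simp
    ultimately show "deriv (\<lambda>z. \<Sum>n. a n * z ^ n) 1 \<noteq> 0" using dv by simp
  qed
qed



lemma geo_partial_le:
  fixes q :: real assumes "0 \<le> q" "q < 1"
  shows "(\<Sum>n\<le>m. q ^ n) \<le> 1 / (1 - q)"
proof -
  have s: "(\<lambda>n. q ^ n) sums (1 / (1 - q))" by (rule geometric_sums) (use assms in simp)
  have "(\<Sum>n\<le>m. q ^ n) \<le> (\<Sum>n. q ^ n)"
    by (rule sum_le_suminf) (use s assms in \<open>auto simp: sums_iff\<close>)
  thus ?thesis using s by (simp add: sums_iff)
qed

lemma int_box_sum_bound:
  fixes c :: real and K :: int assumes c: "c > 0"
  shows "(\<Sum>k\<in>{-K..K}. exp (- c * \<bar>real_of_int k\<bar>)) \<le> 2 / (1 - exp (- c))"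
proof -
  define q where "q = exp (- c)"
  have q: "0 \<le> q" "q < 1" using c by (auto simp: q_def)
  define m where "m = nat K"
  define g where "g k = exp (- c * \<bar>real_of_int k\<bar>)" for k :: int
  have gnn: "g k \<ge> 0" for k by (simp add: g_def)
  define A1 where "A1 = (\<lambda>n. int n) ` {..m}"
  define A2 where "A2 = (\<lambda>n. - int n) ` {..m}"
  have sub: "{-K..K} \<subseteq> A1 \<union> A2"
  proof
    fix k assume k: "k \<in> {-K..K}"
    show "k \<in> A1 \<union> A2"
    proof (cases "k \<ge> 0")
      case True
      hence "k = int (nat k)" "nat k \<le> m" using k by (auto simp: m_def)
      thus ?thesis unfolding A1_def by blast
    next
      case False
      hence "k = - int (nat (-k))" "nat (-k) \<le> m" using k by (auto simp: m_def)
      thus ?thesis unfolding A2_def by blast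
    qed
  qed
  have fin: "finite A1" "finite A2" by (auto simp: A1_def A2_def)
  have "sum g {-K..K} \<le> sum g (A1 \<union> A2)"
    by (rule sum_mono2) (use sub fin gnn in auto)
  also have "\<dots> \<le> sum g A1 + sum g A2"
  proof -
    have "sum g (A1 \<union> A2) = sum g A1 + sum g (A2 - A1)"
      using fin by (metis Un_Diff_cancel finite_Diff sum.union_disjoint Diff_disjoint)
    also have "sum g (A2 - A1) \<le> sum g A2" by (rule sum_mono2) (use fin gnn in auto)
    finally show ?thesis by simp
  qed
  also have "sum g A1 = (\<Sum>n\<le>m. q ^ n)"
    unfolding A1_def by (subst sum.reindex) (auto simp: inj_on_def g_def q_def mult.commute simp flip: exp_of_nat_mult)
  also have "sum g A2 = (\<Sum>n\<le>m. q ^ n)"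
    unfolding A2_def by (subst sum.reindex) (auto simp: inj_on_def g_def q_def mult.commute simp flip: exp_of_nat_mult)
  also have "(\<Sum>n\<le>m. q ^ n) + (\<Sum>n\<le>m. q ^ n) \<le> 1 / (1 - q) + 1 / (1 - q)"
    by (intro add_mono geo_partial_le[OF q])
  finally show ?thesis unfolding g_def q_def by simp
qed

definition Nrm :: "int ^ 'd \<Rightarrow> real" where
  "Nrm x = (\<Sum>i\<in>UNIV. \<bar>real_of_int (x $ i)\<bar>)"

lemma Nrm_nonneg: "Nrm x \<ge> 0" by (simp add: Nrm_def sum_nonneg)

lemma zd_summable:
  fixes c :: real assumes c: "c > 0"
  shows "(\<lambda>x::int ^ 'd. exp (- c * Nrm x)) summable_on UNIV"
proof (rule nonneg_bdd_above_summable_on)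
  define B where "B = 2 / (1 - exp (- c))"
  show "bdd_above (sum (\<lambda>x::int ^ 'd. exp (- c * Nrm x)) ` {F. F \<subseteq> UNIV \<and> finite F})"
  proof (rule bdd_aboveI2)
    fix P :: "(int ^ 'd) set" assume "P \<in> {F. F \<subseteq> UNIV \<and> finite F}"
    hence P: "finite P" by simp
    define K where "K = (\<Sum>x\<in>P. \<Sum>i\<in>UNIV. \<bar>x $ i\<bar>)"
    have Kb: "\<bar>x $ i\<bar> \<le> K" if "x \<in> P" for x i
    proof -
      have "\<bar>x $ i\<bar> \<le> (\<Sum>i\<in>UNIV. \<bar>x $ i\<bar>)"
        by (rule member_le_sum) auto
      also have "\<dots> \<le> K" unfolding K_def
        by (rule member_le_sum[of x P "\<lambda>x. \<Sum>i\<in>UNIV. \<bar>x $ i\<bar>"]) (use that P in \<open>auto intro: sum_nonneg\<close>)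
      finally show ?thesis .
    qed
    define Box where "Box = vec_lambda ` (PiE (UNIV :: 'd set) (\<lambda>_. {-K..K}))"
    have injv: "inj_on (vec_lambda :: ('d \<Rightarrow> int) \<Rightarrow> int ^ 'd) A" for A
      by (rule inj_onI) (metis vec_lambda_inverse UNIV_I)
    have finB: "finite Box" unfolding Box_def by (intro finite_imageI finite_PiE) auto
    have PB: "P \<subseteq> Box"
    proof
      fix x assume x: "x \<in> P"
      have "-K \<le> x $ i \<and> x $ i \<le> K" for i using Kb[OF x, of i] by arith
      hence "(\<lambda>i. x $ i) \<in> PiE UNIV (\<lambda>_. {-K..K})" by (auto simp: PiE_def)
      moreover have "x = vec_lambda (\<lambda>i. x $ i)" by simp
      ultimately show "x \<in> Box" unfolding Box_def by blast
    qed
    have ex: "exp (- c * Nrm x) = (\<Prod>i\<in>UNIV. exp (- c * \<bar>real_of_int (x $ i)\<bar>))" for x :: "int ^ 'd"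
      by (simp add: Nrm_def sum_distrib_left exp_sum)
    have "(\<Sum>x\<in>P. exp (- c * Nrm x)) \<le> (\<Sum>x\<in>Box. exp (- c * Nrm x))"
      by (rule sum_mono2[OF finB PB]) auto
    also have "\<dots> = (\<Sum>h\<in>PiE (UNIV :: 'd set) (\<lambda>_. {-K..K}). \<Prod>i\<in>UNIV. exp (- c * \<bar>real_of_int (h i)\<bar>))"
      unfolding Box_def by (subst sum.reindex[OF injv]) (simp only: o_def ex vec_lambda_beta)
    also have "\<dots> = (\<Prod>i\<in>(UNIV :: 'd set). \<Sum>k\<in>{-K..K}. exp (- c * \<bar>real_of_int k\<bar>))"
      by (rule prod_sum_PiE[symmetric]) auto
    also have "\<dots> \<le> (\<Prod>i\<in>(UNIV :: 'd set). B)"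
      by (rule prod_mono) (use int_box_sum_bound[OF c] in \<open>auto simp: B_def intro: sum_nonneg\<close>)
    finally show "(\<Sum>x\<in>P. exp (- c * Nrm x)) \<le> B ^ CARD('d)" by simp
  qed
qed simp

lemma zdn_summable:
  fixes c :: real assumes c: "c > 0"
  shows "(\<lambda>(x::int ^ 'd, n::nat). exp (- c * (Nrm x + real n))) summable_on UNIV"
proof -
  define q where "q = exp (- c)"
  have q: "norm q < 1" using c by (simp add: q_def)
  have hs: "((\<lambda>n. q ^ n) has_sum (1 / (1 - q))) UNIV"
    by (rule sums_nonneg_imp_has_sum[OF geometric_sums[OF q]]) (simp add: q_def)
  have "(\<lambda>(x,n). exp (- c * (Nrm x + real n))) summable_on Sigma (UNIV :: (int ^ 'd) set) (\<lambda>_. UNIV)"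
  proof (rule summable_on_SigmaI)
    fix x :: "int ^ 'd"
    have "((\<lambda>n. exp (- c * Nrm x) * q ^ n) has_sum (exp (- c * Nrm x) * (1 / (1 - q)))) UNIV"
      by (rule has_sum_cmult_right[OF hs])
    moreover have "exp (- c * (Nrm x + real n)) = exp (- c * Nrm x) * q ^ n" for n
    proof -
      have "- c * (Nrm x + real n) = - c * Nrm x + of_nat n * (- c)" by (simp add: algebra_simps)
      thus ?thesis by (simp only: exp_add exp_of_nat_mult q_def)
    qed
    ultimately show "((\<lambda>n. (\<lambda>(x,n). exp (- c * (Nrm x + real n))) (x, n)) has_sum (exp (- c * Nrm x) * (1 / (1 - q)))) UNIV"
      by simp
  next
    show "(\<lambda>x::int^'d. exp (- c * Nrm x) * (1 / (1 - q))) summable_on UNIV"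
      by (intro summable_on_cmult_left zd_summable c)
  qed auto
  thus ?thesis by simp
qed



lemma poly_exp:
  fixes y s :: real assumes "y \<ge> 0" "s > 0"
  shows "(1 + y)^2 \<le> (4 / s^2) * exp s * exp (s * y)"
proof -
  define u where "u = 1 + y"
  have u: "u \<ge> 0" using assms by (simp add: u_def)
  have "s * u / 2 \<le> exp (s * u / 2)" using exp_ge_add_one_self[of "s * u / 2"] by linarith
  moreover have "0 \<le> s * u / 2" using u assms by simp
  ultimately have "(s * u / 2)^2 \<le> exp (s * u / 2) ^ 2" by (rule power_mono)
  also have "exp (s * u / 2) ^ 2 = exp (s * u)" by (simp add: power2_eq_square flip: exp_add)
  finally have "(s * u / 2)^2 \<le> exp (s * u)" .
  hence "s^2 * u^2 \<le> 4 * exp (s * u)" by (simp add: power_divide power_mult_distrib)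
  hence "u^2 \<le> (4 / s^2) * exp (s * u)" using assms by (simp add: field_simps)
  also have "exp (s * u) = exp s * exp (s * y)" by (simp add: u_def distrib_left exp_add)
  finally show ?thesis by (simp add: u_def mult.assoc)
qed

definition Mc :: "real \<Rightarrow> real" where "Mc \<nu> = (64 / \<nu>^2) * exp (\<nu> / 4)"

lemma poly_exp_M:
  fixes y \<nu> :: real assumes "y \<ge> 0" "\<nu> > 0"
  shows "(1 + y)^2 \<le> Mc \<nu> * exp (\<nu> / 4 * y)"
proof -
  have "(1 + y)^2 \<le> (4 / (\<nu>/4)^2) * exp (\<nu>/4) * exp (\<nu>/4 * y)"
    by (rule poly_exp) (use assms in auto)
  also have "4 / (\<nu>/4)^2 = 64 / \<nu>^2" by (simp add: power_divide)
  finally show ?thesis by (simp add: Mc_def)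
qed

lemma norm_exp_minus_one:
  fixes w :: complex
  shows "norm (exp w - 1) \<le> norm w * exp (norm w)"
proof -
  have "norm (exp w - exp 0) \<le> exp (norm w) * norm (w - 0)"
  proof (rule field_differentiable_bound[where S = "cball 0 (norm w)" and f' = exp])
    fix z :: complex assume z: "z \<in> cball 0 (norm w)"
    show "(exp has_field_derivative exp z) (at z within cball 0 (norm w))"
      by (rule DERIV_exp[THEN has_field_derivative_at_within])
    have "norm (exp z) \<le> exp (norm z)" by (rule norm_exp)
    also have "\<dots> \<le> exp (norm w)" using z by simp
    finally show "norm (exp z) \<le> exp (norm w)" .
  qed auto
  thus ?thesis by (simp add: mult.commute)
qed

lemma exp_n_le:
  fixes \<nu> y :: real assumes "\<nu> > 0" "real n \<le> y"
  shows "exp (\<nu> / 8) ^ n \<le> exp (\<nu> / 8 * y)"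
proof -
  have "exp (\<nu> / 8) ^ n = exp (real n * (\<nu> / 8))" by (simp flip: exp_of_nat_mult)
  also have "\<dots> \<le> exp (\<nu> / 8 * y)" using assms by (simp add: mult.commute mult_left_mono)
  finally show ?thesis .
qed

lemma boundB1:
  fixes F C \<nu> y :: real
  assumes \<nu>: "\<nu> > 0" and F: "0 \<le> F" "F \<le> C * exp (- \<nu> * y)" and y: "real n \<le> y"
  shows "F * (real n + 1)^2 * exp (\<nu> / 8) ^ n \<le> C * Mc \<nu> * exp (- (\<nu> / 2) * y)"
proof -
  have y0: "y \<ge> 0" using y by (meson of_nat_0_le_iff order_trans)
  have "0 \<le> C * exp (- \<nu> * y)" using F by linarith
  hence C0: "C \<ge> 0" by (simp add: zero_le_mult_iff)
  have a: "(real n + 1)^2 \<le> Mc \<nu> * exp (\<nu> / 4 * y)"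
  proof -
    have "(real n + 1)^2 \<le> (1 + y)^2" using y by (intro power_mono) auto
    also have "\<dots> \<le> Mc \<nu> * exp (\<nu> / 4 * y)" by (rule poly_exp_M[OF y0 \<nu>])
    finally show ?thesis .
  qed
  have b: "exp (\<nu> / 8) ^ n \<le> exp (\<nu> / 8 * y)" by (rule exp_n_le[OF \<nu> y])
  have "F * (real n + 1)^2 * exp (\<nu> / 8) ^ n \<le> (C * exp (- \<nu> * y)) * (Mc \<nu> * exp (\<nu> / 4 * y)) * exp (\<nu> / 8 * y)"
    by (intro mult_mono a b F) (use C0 in \<open>auto intro: mult_nonneg_nonneg simp: Mc_def\<close>)
  also have "\<dots> = C * Mc \<nu> * (exp (- \<nu> * y) * exp (\<nu> / 4 * y) * exp (\<nu> / 8 * y))" by (simp only: mult_ac)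
  also have "\<dots> = C * Mc \<nu> * exp (- \<nu> * y + \<nu> / 4 * y + \<nu> / 8 * y)" by (simp only: exp_add)
  also have "\<dots> \<le> C * Mc \<nu> * exp (- (\<nu> / 2) * y)"
    using C0 \<nu> y0 by (intro mult_left_mono) (auto simp: Mc_def)
  finally show ?thesis .
qed

lemma boundB2:
  fixes F C \<nu> y \<eta> :: real and w :: complex
  assumes \<nu>: "\<nu> > 0" and F: "0 \<le> F" "F \<le> C * exp (- \<nu> * y)" and y: "real n \<le> y"
    and \<eta>: "0 \<le> \<eta>" "\<eta> \<le> \<nu> / 8" and w: "norm w \<le> \<eta> * y"
  shows "F * norm (exp w - 1) * (real n + 1) * exp (\<nu> / 8) ^ n \<le> \<eta> * C * Mc \<nu> * exp (- (\<nu> / 2) * y)"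
proof -
  have y0: "y \<ge> 0" using y by (meson of_nat_0_le_iff order_trans)
  have "0 \<le> C * exp (- \<nu> * y)" using F by linarith
  hence C0: "C \<ge> 0" by (simp add: zero_le_mult_iff)
  have e1: "norm (exp w - 1) \<le> (\<eta> * y) * exp (\<nu> / 8 * y)"
  proof -
    have "norm (exp w - 1) \<le> norm w * exp (norm w)" by (rule norm_exp_minus_one)
    also have "\<dots> \<le> (\<eta> * y) * exp (\<nu> / 8 * y)"
    proof (rule mult_mono)
      have "norm w \<le> \<nu> / 8 * y" using w \<eta> y0 by (meson mult_right_mono order_trans)
      thus "exp (norm w) \<le> exp (\<nu> / 8 * y)" by simp
    qed (use w \<eta> y0 in auto)
    finally show ?thesis .
  qed
  have e2: "(real n + 1) * exp (\<nu> / 8) ^ n \<le> (1 + y) * exp (\<nu> / 8 * y)"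
    by (intro mult_mono exp_n_le[OF \<nu> y]) (use y in auto)
  have e3: "y * (1 + y) \<le> Mc \<nu> * exp (\<nu> / 4 * y)"
  proof -
    have "y * (1 + y) \<le> (1 + y)^2" using y0 by (simp add: power2_eq_square mult_right_mono)
    also have "\<dots> \<le> Mc \<nu> * exp (\<nu> / 4 * y)" by (rule poly_exp_M[OF y0 \<nu>])
    finally show ?thesis .
  qed
  have "F * norm (exp w - 1) * (real n + 1) * exp (\<nu> / 8) ^ n = F * norm (exp w - 1) * ((real n + 1) * exp (\<nu> / 8) ^ n)"
    by (simp add: mult.assoc)
  also have "\<dots> \<le> (C * exp (- \<nu> * y)) * ((\<eta> * y) * exp (\<nu> / 8 * y)) * ((1 + y) * exp (\<nu> / 8 * y))"
    by (intro mult_mono e1 e2 F) (use C0 \<eta> y0 in auto)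
  also have "\<dots> = \<eta> * C * (y * (1 + y)) * (exp (- \<nu> * y) * exp (\<nu> / 8 * y) * exp (\<nu> / 8 * y))"
    by (simp only: mult_ac)
  also have "\<dots> = \<eta> * C * (y * (1 + y)) * exp (- \<nu> * y + \<nu> / 8 * y + \<nu> / 8 * y)"
    by (simp only: exp_add)
  also have "\<dots> \<le> \<eta> * C * (Mc \<nu> * exp (\<nu> / 4 * y)) * exp (- \<nu> * y + \<nu> / 8 * y + \<nu> / 8 * y)"
    using e3 C0 \<eta> by (intro mult_right_mono mult_left_mono) auto
  also have "\<dots> = \<eta> * C * Mc \<nu> * (exp (- \<nu> * y + \<nu> / 8 * y + \<nu> / 8 * y) * exp (\<nu> / 4 * y))"
    by (simp only: mult_ac)
  also have "\<dots> = \<eta> * C * Mc \<nu> * exp (- \<nu> * y + \<nu> / 8 * y + \<nu> / 8 * y + \<nu> / 4 * y)"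
    by (simp only: exp_add)
  also have "- \<nu> * y + \<nu> / 8 * y + \<nu> / 8 * y + \<nu> / 4 * y = - (\<nu> / 2) * y" by (simp add: algebra_simps)
  finally show ?thesis .
qed

lemma boundB3:
  fixes F C \<nu> y :: real and w :: complex
  assumes \<nu>: "\<nu> > 0" and F: "0 \<le> F" "F \<le> C * exp (- \<nu> * y)" and y0: "0 \<le> y"
    and w: "norm w \<le> \<nu> / 8 * y"
  shows "F * norm (exp w) \<le> C * exp (- (\<nu> / 2) * y)"
proof -
  have "0 \<le> C * exp (- \<nu> * y)" using F by linarith
  hence C0: "C \<ge> 0" by (simp add: zero_le_mult_iff)
  have "norm (exp w) \<le> exp (\<nu> / 8 * y)"
    using norm_exp[of w] w by (meson exp_le_cancel_iff order_trans)
  hence "F * norm (exp w) \<le> (C * exp (- \<nu> * y)) * exp (\<nu> / 8 * y)"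
    by (intro mult_mono F) (use C0 in auto)
  also have "\<dots> = C * (exp (- \<nu> * y) * exp (\<nu> / 8 * y))" by (simp only: mult_ac)
  also have "\<dots> = C * exp (- \<nu> * y + \<nu> / 8 * y)" by (simp only: exp_add)
  also have "\<dots> \<le> C * exp (- (\<nu> / 2) * y)" using C0 \<nu> y0 by (intro mult_left_mono) auto
  finally show ?thesis .
qed

lemma fub:
  fixes G :: "'a \<Rightarrow> nat \<Rightarrow> 'b::{banach,complete_uniform_space,uniform_topological_group_add}"
  assumes "(\<lambda>(x,n). G x n) summable_on UNIV"
  shows "(\<lambda>x. G x n) summable_on UNIV"
    and "(\<lambda>n. infsum (\<lambda>x. G x n) UNIV) sums infsum (\<lambda>(x,n). G x n) UNIV"
proof -
  define T where "T = infsum (\<lambda>(x,n). G x n) UNIV"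
  have "((\<lambda>(x,n). G x n) has_sum T) (UNIV \<times> UNIV)" using assms by (simp add: T_def)
  hence hs: "((\<lambda>(n,x). G x n) has_sum T) (Sigma UNIV (\<lambda>_. UNIV))"
    by (subst (asm) has_sum_swap) (simp add: case_prod_unfold)
  have sec: "(\<lambda>x. G x n) summable_on UNIV" for n
    using summable_on_SigmaD1[of "\<lambda>n x. G x n" UNIV "\<lambda>_. UNIV" n] hs
    by (auto simp: summable_on_def case_prod_unfold)
  thus "(\<lambda>x. G x n) summable_on UNIV" .
  have "((\<lambda>n. infsum (\<lambda>x. G x n) UNIV) has_sum T) UNIV"
    by (rule has_sum_Sigma'[OF hs]) (use sec in simp)
  thus "(\<lambda>n. infsum (\<lambda>x. G x n) UNIV) sums infsum (\<lambda>(x,n). G x n) UNIV"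
    unfolding T_def by (rule has_sum_imp_sums)
qed



lemma has_sum_diff':
  fixes f g :: "'a \<Rightarrow> 'b::topological_ab_group_add"
  assumes "(f has_sum a) A" "(g has_sum b) A"
  shows "((\<lambda>x. f x - g x) has_sum (a - b)) A"
proof -
  have "((\<lambda>x. - g x) has_sum (- b)) A" using assms(2) by (simp add: has_sum_uminus)
  from has_sum_add[OF assms(1) this] show ?thesis by simp
qed

lemma norm_dotc_le:
  fixes x :: "int ^ 'd" and \<xi> :: "complex ^ 'd"
  shows "norm (dotc x \<xi>) \<le> Nrm x * norm \<xi>"
proof -
  have "norm (dotc x \<xi>) \<le> (\<Sum>i\<in>UNIV. norm (of_int (x $ i) * \<xi> $ i))"
    unfolding dotc_def by (rule norm_sum)
  also have "\<dots> \<le> (\<Sum>i\<in>UNIV. \<bar>real_of_int (x $ i)\<bar> * norm \<xi>)"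
  proof (rule sum_mono)
    fix i
    have "norm (of_int (x $ i) * \<xi> $ i) = \<bar>real_of_int (x $ i)\<bar> * norm (\<xi> $ i)"
      by (simp add: norm_mult)
    also have "\<dots> \<le> \<bar>real_of_int (x $ i)\<bar> * norm \<xi>"
      by (intro mult_left_mono Finite_Cartesian_Product.norm_nth_le) auto
    finally show "norm (of_int (x $ i) * \<xi> $ i) \<le> \<bar>real_of_int (x $ i)\<bar> * norm \<xi>" .
  qed
  also have "\<dots> = Nrm x * norm \<xi>" by (simp add: Nrm_def sum_distrib_right)
  finally show ?thesis .
qed



theorem lemma3:
  fixes f :: "int ^ 'd \<Rightarrow> nat \<Rightarrow> real"
    and lam :: "complex ^ 'd \<Rightarrow> complex"
  assumes nonneg: "\<And>x n. f x n \<ge> 0"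
    and no_zero_time: "\<And>x. f x 0 = 0"
    and prob: "((\<lambda>(x, n). f x n) has_sum 1) UNIV"
    and nondeg: "nondegenerate f"
    and aper: "aperiodic f"
    and tail: "\<exists>C \<nu>. \<nu> > 0 \<and>
                 (\<forall>x n. f x n \<le> C * exp (- \<nu> * ((\<Sum>i\<in>UNIV. \<bar>real_of_int (x $ i)\<bar>) + real n)))"
    and lam_0: "lam 0 = 0"
    and lam_cont: "\<exists>r > 0. continuous_on (ball 0 r) lam"
    and lam_char: "\<exists>r > 0. \<exists>\<rho> > 0. \<forall>\<xi> \<in> ball 0 r. \<forall>\<mu> \<in> ball 0 \<rho>.
                      F_fun f \<xi> \<mu> = 0 \<longleftrightarrow> \<mu> = lam \<xi>"
  shows "\<exists>\<delta> > 0. \<exists>\<epsilon> > 0. \<forall>\<xi> :: complex ^ 'd. norm \<xi> < \<delta> \<longrightarrow>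
           (fhat f lam \<xi> 0 = 0 \<and>
            (\<exists>U. open U \<and> cball 0 (1 + \<epsilon>) \<subseteq> U \<and>
                 (\<forall>z\<in>U. summable (\<lambda>n. norm (f_xi f lam \<xi> n * z ^ n)))))
         \<and> (\<forall>z \<in> cball 0 (1 + \<epsilon>). fhat f lam \<xi> z = 1 \<longleftrightarrow> z = 1)
         \<and> deriv (fhat f lam \<xi>) 1 \<noteq> 0"
proof -
  obtain C \<nu> where \<nu>: "\<nu> > 0" and fC0:
    "\<And>x n. f x n \<le> C * exp (- \<nu> * ((\<Sum>i\<in>UNIV. \<bar>real_of_int (x $ i)\<bar>) + real n))"
    using tail by blast
  have fC: "f x n \<le> C * exp (- \<nu> * (Nrm x + real n))" for x n
    using fC0[of x n] by (simp add: Nrm_def)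
  have yN: "real n \<le> Nrm x + real n" for x :: "int ^ 'd" and n using Nrm_nonneg[of x] by simp
  have y0: "0 \<le> Nrm x + real n" for x :: "int ^ 'd" and n using Nrm_nonneg[of x] by simp
  have C0: "C \<ge> 0"
  proof -
    have "0 \<le> C * exp (- \<nu> * (Nrm (0::int^'d) + real 0))" using fC[of 0 0] nonneg[of 0 0] by linarith
    thus ?thesis by (simp add: zero_le_mult_iff)
  qed
  define \<Phi> where "\<Phi> x n = exp (- (\<nu> / 2) * (Nrm x + real n))" for x :: "int ^ 'd" and n :: nat
  have \<Phi>nn: "\<Phi> x n \<ge> 0" for x n by (simp add: \<Phi>_def)
  have \<Phi>sum: "(\<lambda>(x,n). \<Phi> x n) summable_on UNIV"
    using zdn_summable[of "\<nu> / 2", where 'd = 'd] \<nu> by (simp add: \<Phi>_def)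
  define S\<Phi> where "S\<Phi> = infsum (\<lambda>(x,n). \<Phi> x n) UNIV"
  have \<Phi>n: "(\<lambda>x. \<Phi> x n) summable_on UNIV" for n by (rule fub(1)[OF \<Phi>sum])
  have \<Phi>sums: "(\<lambda>n. infsum (\<lambda>x. \<Phi> x n) UNIV) sums S\<Phi>" unfolding S\<Phi>_def by (rule fub(2)[OF \<Phi>sum])
  have \<Phi>n_nn: "infsum (\<lambda>x. \<Phi> x n) UNIV \<ge> 0" for n by (intro infsum_nonneg \<Phi>nn)
  have S\<Phi>_nn: "S\<Phi> \<ge> 0" using \<Phi>sums \<Phi>n_nn by (metis sums_unique sums_summable suminf_nonneg)
  define M where "M = Mc \<nu>"
  have M0: "M \<ge> 0" by (simp add: M_def Mc_def)
  define R where "R = exp (\<nu> / 8)"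
  have R1: "R > 1" using \<nu> by (simp add: R_def)
  define p where "p n = infsum (\<lambda>x. f x n) UNIV" for n
  have fsum: "(\<lambda>(x,n). f x n) summable_on UNIV" using prob by (simp add: summable_on_def; blast)
  have fn_sum: "(\<lambda>x. f x n) summable_on UNIV" for n by (rule fub(1)[OF fsum])
  have psums: "p sums 1"
  proof -
    have "infsum (\<lambda>(x,n). f x n) UNIV = 1" by (rule infsumI[OF prob])
    moreover have "p = (\<lambda>n. infsum (\<lambda>x. f x n) UNIV)" by (simp add: fun_eq_iff p_def)
    ultimately show ?thesis using fub(2)[OF fsum] by simp
  qed
  have p_nn: "p n \<ge> 0" for n unfolding p_def by (intro infsum_nonneg nonneg)
  have p0: "p 0 = 0" unfolding p_def by (simp add: no_zero_time)
  have p_ge: "f x n \<le> p n" for x n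
  proof -
    have "infsum (\<lambda>x. f x n) {x} \<le> infsum (\<lambda>x. f x n) UNIV"
      by (rule infsum_mono_neutral) (use fn_sum nonneg in auto)
    thus ?thesis by (simp add: p_def)
  qed
  have psumR: "summable (\<lambda>n. p n * (real n + 1)^2 * R^n)"
  proof (rule summable_comparison_test'[where g = "\<lambda>n. C * M * infsum (\<lambda>x. \<Phi> x n) UNIV"])
    show "summable (\<lambda>n. C * M * infsum (\<lambda>x. \<Phi> x n) UNIV)"
      by (intro summable_mult sums_summable[OF \<Phi>sums])
    fix n :: nat
    have "p n * (real n + 1)^2 * R^n = infsum (\<lambda>x. f x n * ((real n + 1)^2 * R^n)) UNIV"
      unfolding p_def by (subst infsum_cmult_left) (auto simp: fn_sum mult.assoc)
    also have "\<dots> \<le> infsum (\<lambda>x. C * M * \<Phi> x n) UNIV"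
    proof (rule infsum_mono)
      show "(\<lambda>x. f x n * ((real n + 1)^2 * R^n)) summable_on UNIV"
        by (intro summable_on_cmult_left fn_sum)
      show "(\<lambda>x. C * M * \<Phi> x n) summable_on UNIV" by (intro summable_on_cmult_right \<Phi>n)
      fix x
      show "f x n * ((real n + 1)^2 * R^n) \<le> C * M * \<Phi> x n"
        using boundB1[OF \<nu> nonneg fC yN, of x n] by (simp add: M_def \<Phi>_def R_def mult.assoc)
    qed
    also have "\<dots> = C * M * infsum (\<lambda>x. \<Phi> x n) UNIV" by (rule infsum_cmult_right) (simp add: \<Phi>n)
    finally show "norm (p n * (real n + 1)^2 * R^n) \<le> C * M * infsum (\<lambda>x. \<Phi> x n) UNIV"
      using p_nn[of n] R1 by simp
  qed
  obtain S c where S: "finite S" "S \<subseteq> {(x, n). f x n > 0}" "1 = (\<Sum>s\<in>S. c s * int (snd s))"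
  proof -
    have "\<exists>S c. finite S \<and> S \<subseteq> {(x, n). f x n > 0} \<and> (\<forall>i. (0::int^'d) $ i = (\<Sum>s\<in>S. c s * (fst s) $ i)) \<and> (1::int) = (\<Sum>s\<in>S. c s * int (snd s))"
      using aper unfolding aperiodic_def by blast
    thus ?thesis using that by blast
  qed
  have Spos: "p (snd s) > 0" if "s \<in> S" for s
  proof -
    obtain x n where s: "s = (x, n)" by fastforce
    have "f x n > 0" using S(2) that s by auto
    thus ?thesis using p_ge[of x n] s by simp
  qed
  obtain \<epsilon> \<kappa> where eps: "\<epsilon> > 0" and kap: "\<kappa> > 0" and epsR: "1 + \<epsilon> < R" and
    PS: "\<And>a::nat\<Rightarrow>complex. a 0 = 0 \<Longrightarrow> a sums 1 \<Longrightarrow>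
     summable (\<lambda>n. norm (a n - of_real (p n)) * (real n + 1) * R^n) \<Longrightarrow>
     (\<Sum>n. norm (a n - of_real (p n)) * (real n + 1) * R^n) \<le> \<kappa> \<Longrightarrow>
     ((\<forall>z\<in>cball 0 (1+\<epsilon>). (\<Sum>n. a n * z^n) = 1 \<longleftrightarrow> z = 1) \<and> deriv (\<lambda>z. \<Sum>n. a n * z^n) 1 \<noteq> 0)"
    using ps_abstract[OF p_nn p0 psums R1 psumR S(1) Spos S(3)[symmetric]] by blast

  obtain r1 where r1: "r1 > 0" "continuous_on (ball 0 r1) lam" using lam_cont by blast
  have cont0: "continuous (at 0) lam"
    using r1 continuous_on_eq_continuous_at[of "ball 0 r1" lam] by simp
  obtain r2 \<rho> where r2: "r2 > 0" and \<rho>: "\<rho> > 0"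
    and LC: "\<forall>\<xi> \<in> ball 0 r2. \<forall>\<mu> \<in> ball 0 \<rho>. F_fun f \<xi> \<mu> = 0 \<longleftrightarrow> \<mu> = lam \<xi>"
    using lam_char by blast
  define X where "X = C * M * S\<Phi>"
  have X0: "X \<ge> 0" using C0 M0 S\<Phi>_nn by (simp add: X_def)
  define m where "m = min \<kappa> (1/2)"
  have m0: "m > 0" using kap by (simp add: m_def)
  define \<eta>1 where "\<eta>1 = min (\<nu> / 8) (min (\<rho> / 2) (m / (X + 1)))"
  have \<eta>1_pos: "\<eta>1 > 0" using \<nu> \<rho> m0 X0 by (simp add: \<eta>1_def)
  have \<eta>1\<nu>: "\<eta>1 \<le> \<nu> / 8" unfolding \<eta>1_def by (rule min.cobounded1)
  have \<eta>1\<rho>2: "\<eta>1 \<le> \<rho> / 2" unfolding \<eta>1_def by (meson min.cobounded1 min.cobounded2 order_trans)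
  have \<eta>1m: "\<eta>1 \<le> m / (X + 1)" unfolding \<eta>1_def by (meson min.cobounded2 order_trans)
  have \<eta>1\<rho>: "\<eta>1 < \<rho>" using \<rho> \<eta>1\<rho>2 by simp
  have \<eta>1X: "\<eta>1 * X \<le> m"
  proof -
    have "\<eta>1 * X \<le> (m / (X + 1)) * X" using X0 \<eta>1m by (intro mult_right_mono) auto
    also have "\<dots> \<le> m" using X0 m0 by (simp add: field_simps)
    finally show ?thesis .
  qed
  obtain d where d: "d > 0" and dlam: "\<And>\<xi>. dist \<xi> 0 < d \<Longrightarrow> dist (lam \<xi>) (lam 0) < \<eta>1"
    using cont0 \<eta>1_pos unfolding continuous_at_eps_delta by blast
  define \<delta> where "\<delta> = min d (min r2 \<eta>1)"
  have \<delta>_pos: "\<delta> > 0" using d r2 \<eta>1_pos by (simp add: \<delta>_def)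
  show ?thesis
  proof (rule exI[of _ \<delta>], rule conjI[OF \<delta>_pos], rule exI[of _ \<epsilon>], rule conjI[OF eps], intro allI impI)
    fix \<xi> :: "complex ^ 'd" assume \<xi>: "norm \<xi> < \<delta>"
    have \<xi>1: "norm \<xi> \<le> \<eta>1" using \<xi> by (simp add: \<delta>_def)
    have \<xi>2: "\<xi> \<in> ball 0 r2" using \<xi> by (simp add: \<delta>_def)
    have lam\<eta>: "norm (lam \<xi>) < \<eta>1" using dlam[of \<xi>] \<xi> lam_0 by (simp add: \<delta>_def dist_norm)
    have lam\<rho>: "lam \<xi> \<in> ball 0 \<rho>" using lam\<eta> \<eta>1\<rho> by simp
    have wb: "norm (dotc x \<xi> - lam \<xi> * of_nat n) \<le> \<eta>1 * (Nrm x + real n)" for x n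
    proof -
      have "norm (dotc x \<xi> - lam \<xi> * of_nat n) \<le> norm (dotc x \<xi>) + norm (lam \<xi> * of_nat n)"
        by (rule norm_triangle_ineq4)
      also have "norm (dotc x \<xi>) \<le> Nrm x * \<eta>1"
        using norm_dotc_le[of x \<xi>] \<xi>1 Nrm_nonneg[of x] by (meson mult_left_mono order_trans)
      also have "norm (lam \<xi> * of_nat n) \<le> \<eta>1 * real n"
        using lam\<eta> by (simp add: norm_mult mult_right_mono)
      finally show ?thesis by (simp add: algebra_simps)
    qed
    define G where "G x n = of_real (f x n) * exp (dotc x \<xi> - lam \<xi> * of_nat n)" for x n
    have Gb: "norm (G x n) \<le> C * \<Phi> x n" for x n
    proof -
      have "norm (dotc x \<xi> - lam \<xi> * of_nat n) \<le> \<nu> / 8 * (Nrm x + real n)"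
        using wb[of x n] \<eta>1\<nu> y0[of x n] by (meson mult_right_mono order_trans)
      from boundB3[OF \<nu> nonneg fC y0 this]
      show ?thesis using nonneg[of x n] by (simp add: G_def \<Phi>_def norm_mult)
    qed
    have Gsum: "(\<lambda>(x,n). G x n) summable_on UNIV"
    proof -
      have "(\<lambda>xn. C * (case xn of (x,n) \<Rightarrow> \<Phi> x n)) summable_on UNIV"
        by (rule summable_on_cmult_right[OF \<Phi>sum])
      moreover have "\<And>xn. xn \<in> UNIV \<Longrightarrow> norm (case xn of (x,n) \<Rightarrow> G x n) \<le> C * (case xn of (x,n) \<Rightarrow> \<Phi> x n)"
        by (auto split: prod.split simp: Gb)
      ultimately have "(\<lambda>xn. norm (case xn of (x,n) \<Rightarrow> G x n)) summable_on UNIV"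
        by (rule Infinite_Sum.abs_summable_on_comparison_test')
      thus ?thesis by (rule Infinite_Sum.abs_summable_summable)
    qed
    define a where "a n = f_xi f lam \<xi> n" for n
    have a_eq: "a = (\<lambda>n. infsum (\<lambda>x. G x n) UNIV)"
      by (simp add: fun_eq_iff a_def f_xi_def G_def)
    define S0 where "S0 = infsum (\<lambda>(x,n). G x n) UNIV"
    have asum0: "a sums S0" unfolding a_eq S0_def by (rule fub(2)[OF Gsum])
    have Gn: "(\<lambda>x. G x n) summable_on UNIV" for n by (rule fub(1)[OF Gsum])
    have a0: "a 0 = 0" unfolding a_eq by (simp add: G_def no_zero_time)
    have pc: "((\<lambda>x. of_real (f x n)) has_sum (of_real (p n) :: complex)) UNIV" for n
      unfolding p_def by (rule has_sum_of_real) (simp add: fn_sum)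
    have Dn: "((\<lambda>x. of_real (f x n) * (exp (dotc x \<xi> - lam \<xi> * of_nat n) - 1)) has_sum (a n - of_real (p n))) UNIV" for n
    proof -
      have "((\<lambda>x. G x n - of_real (f x n)) has_sum (a n - of_real (p n))) UNIV"
        using has_sum_diff'[OF has_sum_infsum[OF Gn[of n]] pc[of n]] by (simp add: a_eq)
      thus ?thesis by (simp add: G_def algebra_simps)
    qed
    have dbound: "norm (a n - of_real (p n)) * (real n + 1) * R^n \<le> \<eta>1 * C * M * infsum (\<lambda>x. \<Phi> x n) UNIV" for n
    proof -
      define K where "K = (real n + 1) * R^n"
      have K0: "K > 0" using R1 by (simp add: K_def)
      have "norm (a n - of_real (p n)) \<le> infsum (\<lambda>x. \<Phi> x n) UNIV * (\<eta>1 * C * M / K)"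
      proof (rule norm_infsum_le[OF Dn has_sum_cmult_left[OF has_sum_infsum[OF \<Phi>n]]])
        fix x
        have "f x n * norm (exp (dotc x \<xi> - lam \<xi> * of_nat n) - 1) * (real n + 1) * exp (\<nu> / 8) ^ n \<le> \<eta>1 * C * Mc \<nu> * exp (- (\<nu> / 2) * (Nrm x + real n))"
          by (rule boundB2[OF \<nu> nonneg fC yN _ \<eta>1\<nu> wb]) (use \<eta>1_pos in simp)
        hence "f x n * norm (exp (dotc x \<xi> - lam \<xi> * of_nat n) - 1) * K \<le> \<eta>1 * C * M * \<Phi> x n"
          by (simp add: K_def R_def M_def \<Phi>_def mult.assoc)
        hence "f x n * norm (exp (dotc x \<xi> - lam \<xi> * of_nat n) - 1) \<le> \<eta>1 * C * M * \<Phi> x n / K"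
          using K0 by (simp add: pos_le_divide_eq)
        thus "norm (of_real (f x n) * (exp (dotc x \<xi> - lam \<xi> * of_nat n) - 1)) \<le> \<Phi> x n * (\<eta>1 * C * M / K)"
          using nonneg[of x n] by (simp add: norm_mult mult_ac)
      qed
      hence "norm (a n - of_real (p n)) * K \<le> infsum (\<lambda>x. \<Phi> x n) UNIV * (\<eta>1 * C * M / K) * K"
        using K0 by (intro mult_right_mono) auto
      also have "\<dots> = \<eta>1 * C * M * infsum (\<lambda>x. \<Phi> x n) UNIV" using K0 by simp
      finally show ?thesis by (simp add: K_def mult.assoc)
    qed
    have bsum: "summable (\<lambda>n. \<eta>1 * C * M * infsum (\<lambda>x. \<Phi> x n) UNIV)"
      by (intro summable_mult sums_summable[OF \<Phi>sums])
    have dsum: "summable (\<lambda>n. norm (a n - of_real (p n)) * (real n + 1) * R^n)"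
      by (rule summable_comparison_test'[OF bsum]) (use dbound R1 in simp)
    have dle0: "(\<Sum>n. norm (a n - of_real (p n)) * (real n + 1) * R^n) \<le> \<eta>1 * X"
    proof -
      have "(\<Sum>n. norm (a n - of_real (p n)) * (real n + 1) * R^n) \<le> (\<Sum>n. \<eta>1 * C * M * infsum (\<lambda>x. \<Phi> x n) UNIV)"
        by (rule suminf_le[OF dbound dsum bsum])
      also have "\<dots> = \<eta>1 * C * M * S\<Phi>" using sums_mult[OF \<Phi>sums, of "\<eta>1 * C * M"] by (simp add: sums_iff)
      finally show ?thesis by (simp add: X_def mult.assoc)
    qed
    have dle: "(\<Sum>n. norm (a n - of_real (p n)) * (real n + 1) * R^n) \<le> \<kappa>"
      using dle0 \<eta>1X by (simp add: m_def)
    have dle2: "(\<Sum>n. norm (a n - of_real (p n)) * (real n + 1) * R^n) \<le> 1/2"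
      using dle0 \<eta>1X by (simp add: m_def)
    have S0: "S0 = 1"
    proof -
      have "(\<lambda>n. of_real (p n) :: complex) sums of_real 1" using psums sums_of_real_iff by blast
      hence pcs: "(\<lambda>n. of_real (p n) :: complex) sums 1" by simp
      have ds: "(\<lambda>n. a n - of_real (p n)) sums (S0 - 1)" by (rule sums_diff[OF asum0 pcs])
      have "norm (\<Sum>n. a n - of_real (p n)) \<le> (\<Sum>n. norm (a n - of_real (p n)) * (real n + 1) * R^n)"
      proof (rule suminf_norm_bound(2)[OF dsum])
        fix n
        show "norm (a n - of_real (p n)) \<le> norm (a n - of_real (p n)) * (real n + 1) * R ^ n"
        proof -
          have "norm (a n - of_real (p n)) * 1 \<le> norm (a n - of_real (p n)) * R ^ n"
            using R1 by (intro mult_left_mono) (auto simp: one_le_power)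
          also have "\<dots> \<le> norm (a n - of_real (p n)) * (real n + 1) * R ^ n"
            by (rule mul_n1) (use R1 in auto)
          finally show ?thesis by simp
        qed
      qed
      hence "norm (S0 - 1) \<le> 1/2" using ds dle2 by (simp add: sums_iff)
      hence S0nz: "S0 \<noteq> 0" by auto
      have "F_fun f \<xi> (lam \<xi>) = 0" using LC \<xi>2 lam\<rho> by blast
      hence "Ln S0 = 0" by (simp add: F_fun_def S0_def G_def)
      hence "exp (Ln S0) = 1" by simp
      thus ?thesis using S0nz by simp
    qed
    have asum: "a sums 1" using asum0 S0 by simp
    have main: "(\<forall>z\<in>cball 0 (1+\<epsilon>). (\<Sum>n. a n * z^n) = 1 \<longleftrightarrow> z = 1) \<and> deriv (\<lambda>z. \<Sum>n. a n * z^n) 1 \<noteq> 0"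
      by (rule PS[OF a0 asum dsum dle])
    have fh: "fhat f lam \<xi> = (\<lambda>z. \<Sum>n. a n * z^n)" by (simp add: fun_eq_iff fhat_def a_def)
    have fh0: "fhat f lam \<xi> 0 = 0" using a0 by (simp add: fh)
    have U: "\<exists>U. open U \<and> cball 0 (1 + \<epsilon>) \<subseteq> U \<and> (\<forall>z\<in>U. summable (\<lambda>n. norm (f_xi f lam \<xi> n * z ^ n)))"
    proof (intro exI[of _ "ball 0 R"] conjI ballI)
      show "open (ball (0::complex) R)" by simp
      show "cball 0 (1 + \<epsilon>) \<subseteq> ball (0::complex) R" using epsR by auto
      fix z :: complex assume z: "z \<in> ball 0 R"
      have gs: "summable (\<lambda>n. norm (a n - of_real (p n)) * (real n + 1) * R^n + p n * (real n + 1)^2 * R^n)"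
        by (intro summable_add dsum psumR)
      show "summable (\<lambda>n. norm (f_xi f lam \<xi> n * z ^ n))"
      proof (rule summable_comparison_test'[OF gs])
        fix n
        have zn: "norm z ^ n \<le> R ^ n" using z by (intro power_mono) auto
        have "norm (a n) \<le> norm (a n - of_real (p n)) + p n"
          using norm_triangle_ineq[of "a n - of_real (p n)" "of_real (p n)"] p_nn[of n] by simp
        have "norm (a n * z ^ n) \<le> norm (a n) * R ^ n"
          using zn by (simp add: norm_mult norm_power mult_left_mono)
        also have "\<dots> \<le> (norm (a n - of_real (p n)) + p n) * R ^ n"
          using \<open>norm (a n) \<le> _\<close> R1 by (intro mult_right_mono) auto
        also have "\<dots> = norm (a n - of_real (p n)) * R ^ n + p n * R ^ n" by (simp add: algebra_simps)
        also have "\<dots> \<le> norm (a n - of_real (p n)) * (real n + 1) * R^n + p n * (real n + 1)^2 * R^n"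
        proof (rule add_mono)
          show "norm (a n - of_real (p n)) * R ^ n \<le> norm (a n - of_real (p n)) * (real n + 1) * R^n"
            by (rule mul_n1) (use R1 in auto)
          have "p n * R ^ n \<le> p n * (real n + 1) * R ^ n" by (rule mul_n1) (use R1 p_nn in auto)
          also have "\<dots> \<le> p n * (real n + 1)^2 * R ^ n"
          proof -
            have "(real n + 1) \<le> (real n + 1)^2" by (simp add: power2_eq_square)
            thus ?thesis using p_nn[of n] R1 by (intro mult_right_mono mult_left_mono) auto
          qed
          finally show "p n * R ^ n \<le> p n * (real n + 1)^2 * R ^ n" .
        qed
        finally show "norm (norm (f_xi f lam \<xi> n * z ^ n)) \<le> norm (a n - of_real (p n)) * (real n + 1) * R^n + p n * (real n + 1)^2 * R^n"
          by (simp add: a_def)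
      qed
    qed
    show "(fhat f lam \<xi> 0 = 0 \<and>
            (\<exists>U. open U \<and> cball 0 (1 + \<epsilon>) \<subseteq> U \<and>
                 (\<forall>z\<in>U. summable (\<lambda>n. norm (f_xi f lam \<xi> n * z ^ n)))))
         \<and> (\<forall>z \<in> cball 0 (1 + \<epsilon>). fhat f lam \<xi> z = 1 \<longleftrightarrow> z = 1)
         \<and> deriv (fhat f lam \<xi>) 1 \<noteq> 0"
      using fh0 U main by (simp add: fh)
  qed
qed


end
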